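(* There is a deterministic Congested Clique algorithm which computes a proper $O(a^2)$-vertex-coloring of an input graph $G$ with arboricity $a\ge 2$ within $O(\log a+\log^* n)$ rounds.
   Context: Congested Clique model: there are $n$ processors (vertices) with distinct IDs of $O(\log n)$ bits; computation proceeds in synchronous rounds; in each round every pair of vertices may exchange a message of $O(\log n)$ bits; local computation is free. The input is a graph $G=(V,E')$ on the same vertex set; each vertex initially knows its incident edges in $G$, and $a$ is known to all vertices. The arboricity of a graph is the minimum number of forests whose union covers its edge set. A proper $k$-coloring is a map $\varphi:V\to\{1,\dots,k\}$ with $\varphi(u)\ne\varphi(v)$ for every edge $\{u,v\}$. $\log^* n$ is the number of times $\log_2$ must be iterated starting from $n$ until the value is below $2$. *)

theory Defs
  imports Complex_Main
begin

definition simple_graph :: "nat set \<Rightarrow> nat set set \<Rightarrow> bool" where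
  "simple_graph V E \<longleftrightarrow> (\<forall>e\<in>E. e \<subseteq> V \<and> card e = 2)"

definition nbrs :: "nat set set \<Rightarrow> nat \<Rightarrow> nat set" where
  "nbrs E u = {w. {u, w} \<in> E}"

definition is_cycle :: "nat set set \<Rightarrow> nat list \<Rightarrow> bool" where
  "is_cycle F vs \<longleftrightarrow> length vs \<ge> 3 \<and> distinct vs \<and>
     (\<forall>i < length vs. {vs ! i, vs ! ((i + 1) mod length vs)} \<in> F)"

definition forest :: "nat set set \<Rightarrow> bool" where
  "forest F \<longleftrightarrow> finite F \<and> \<not> (\<exists>vs. is_cycle F vs)"

definition arboricity :: "nat set set \<Rightarrow> nat" where
  "arboricity E = (LEAST k. \<exists>Fs :: nat \<Rightarrow> nat set set.
      (\<forall>i<k. forest (Fs i)) \<and> E = (\<Union>i<k. Fs i))"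

definition proper_coloring :: "nat set \<Rightarrow> nat set set \<Rightarrow> (nat \<Rightarrow> nat) \<Rightarrow> nat \<Rightarrow> bool" where
  "proper_coloring V E \<phi> k \<longleftrightarrow> (\<forall>v\<in>V. \<phi> v \<in> {1..k}) \<and>
     (\<forall>u v. {u, v} \<in> E \<longrightarrow> \<phi> u \<noteq> \<phi> v)"

definition log_star :: "nat \<Rightarrow> nat" where
  "log_star n = (LEAST i. ((\<lambda>x. log 2 x) ^^ i) (real n) < 2)"

text \<open>Vertices are identified with their IDs (natural numbers). A deterministic
  algorithm is given by a message function
  send n a V id N hist dest : the message (a natural number, 0 = no message)
  that vertex id sends to vertex dest, given n, a, the ID set V, its own ID,
  its neighbour set N in G and its history hist of received messages
  (one function sender-ID -> message per elapsed round).
  Local computation is free, so the whole local view is the state.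
  cc_hist send a V E r v is the history of v after r rounds.\<close>

type_synonym cc_send = "nat \<Rightarrow> nat \<Rightarrow> nat set \<Rightarrow> nat \<Rightarrow> nat set \<Rightarrow> (nat \<Rightarrow> nat) list \<Rightarrow> nat \<Rightarrow> nat"
type_synonym cc_out = "nat \<Rightarrow> nat \<Rightarrow> nat set \<Rightarrow> nat \<Rightarrow> nat set \<Rightarrow> (nat \<Rightarrow> nat) list \<Rightarrow> nat"

fun cc_hist :: "cc_send \<Rightarrow> nat \<Rightarrow> nat set \<Rightarrow> nat set set \<Rightarrow> nat \<Rightarrow> nat \<Rightarrow> (nat \<Rightarrow> nat) list" where
  "cc_hist send a V E 0 v = []"
| "cc_hist send a V E (Suc r) v = cc_hist send a V E r v @
     [\<lambda>u. if u \<in> V \<and> u \<noteq> v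
          then send (card V) a V u (nbrs E u) (cc_hist send a V E r u) v else 0]"

end

theory Submission
  imports Defs
begin

definition gpath :: "nat set set \<Rightarrow> nat set \<Rightarrow> nat list \<Rightarrow> bool" where
  "gpath F S ps \<longleftrightarrow> ps \<noteq> [] \<and> distinct ps \<and> set ps \<subseteq> S \<and>
     (\<forall>i. Suc i < length ps \<longrightarrow> {ps!i, ps!Suc i} \<in> F)"

lemma deg2_cycle:
  assumes fin: "finite S" and ne: "S \<noteq> {}"
    and c2: "\<forall>e\<in>F. card e = 2"
    and deg: "\<forall>v\<in>S. \<exists>e1 e2. e1 \<noteq> e2 \<and> e1 \<in> F \<and> e2 \<in> F \<and> e1 \<subseteq> S \<and> e2 \<subseteq> S \<and> v \<in> e1 \<and> v \<in> e2"
  shows "\<exists>vs. is_cycle F vs"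
proof -
  let ?P = "{ps. gpath F S ps}"
  have "?P \<subseteq> {xs. set xs \<subseteq> S \<and> length xs \<le> card S}"
  proof
    fix ps assume "ps \<in> ?P"
    hence "distinct ps" "set ps \<subseteq> S" by (auto simp: gpath_def)
    thus "ps \<in> {xs. set xs \<subseteq> S \<and> length xs \<le> card S}"
    proof -
      have "length ps = card (set ps)" using \<open>distinct ps\<close> by (simp add: distinct_card)
      also have "\<dots> \<le> card S" using card_mono[OF fin \<open>set ps \<subseteq> S\<close>] .
      finally show ?thesis using \<open>set ps \<subseteq> S\<close> by simp
    qed
  qed
  hence finP: "finite ?P" using finite_lists_length_le[OF fin] by (rule finite_subset)
  obtain v0 where "v0 \<in> S" using ne by auto
  hence "[v0] \<in> ?P" by (simp add: gpath_def)
  hence neP: "?P \<noteq> {}" by auto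
  define m where "m = Max (length ` ?P)"
  have "m \<in> length ` ?P" unfolding m_def using finP neP by (intro Max_in) auto
  then obtain ps where ps: "gpath F S ps" and lps: "length ps = m" by auto
  have maxp: "length q \<le> m" if "gpath F S q" for q
    unfolding m_def using finP that by (intro Max_ge) auto
  define k where "k = length ps"
  have k1: "k \<ge> 1" using ps by (cases ps) (auto simp: gpath_def k_def)
  define l where "l = last ps"
  have l: "l = ps ! (k - 1)" using ps by (simp add: l_def k_def gpath_def last_conv_nth)
  have lS: "l \<in> S" using ps unfolding l_def gpath_def using last_in_set by blast
  obtain e1 e2 where ee: "e1 \<noteq> e2" "e1 \<in> F" "e2 \<in> F" "e1 \<subseteq> S" "e2 \<subseteq> S" "l \<in> e1" "l \<in> e2"
    using bspec[OF deg lS] by (elim exE conjE) (rule that)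
  have ex_other: "\<exists>x. e = {l, x} \<and> x \<noteq> l" if "e \<in> F" "l \<in> e" for e
  proof -
    have "card e = 2" using c2 that by auto
    then obtain a b where "e = {a,b}" "a \<noteq> b" by (auto simp: card_2_iff)
    thus ?thesis using that by auto
  qed
  obtain x where x: "e1 = {l, x}" "x \<noteq> l" using ex_other ee by blast
  obtain y where y: "e2 = {l, y}" "y \<noteq> l" using ex_other ee by blast
  have xy: "x \<noteq> y" using x y ee by auto
  have inps: "z \<in> set ps" if "{l, z} \<in> F" "z \<in> S" "z \<noteq> l" for z
  proof (rule ccontr)
    assume nz: "z \<notin> set ps"
    have "gpath F S (ps @ [z])"
      unfolding gpath_def
    proof (intro conjI allI impI)
      show "distinct (ps @ [z])" using ps nz by (simp add: gpath_def)
      show "set (ps @ [z]) \<subseteq> S" using ps that by (simp add: gpath_def)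
      fix i assume i: "Suc i < length (ps @ [z])"
      show "{(ps @ [z]) ! i, (ps @ [z]) ! Suc i} \<in> F"
      proof (cases "Suc i < length ps")
        case True thus ?thesis using ps by (simp add: gpath_def nth_append)
      next
        case False
        hence "i = k - 1" using i by (simp add: k_def)
        have "k - 1 < length ps" using k1 by (simp add: k_def)
        hence "(ps @ [z]) ! i = l" using l \<open>i = k - 1\<close> by (simp add: nth_append)
        moreover have "Suc i = length ps" using \<open>i = k - 1\<close> k1 by (simp add: k_def)
        hence "(ps @ [z]) ! Suc i = z" by simp
        ultimately show ?thesis using that by simp
      qed
    qed simp
    hence "length (ps @ [z]) \<le> m" by (rule maxp)
    thus False using lps by simp
  qed
  have xps: "x \<in> set ps" using inps x ee by auto
  have yps: "y \<in> set ps" using inps y ee by auto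
  have k2: "k \<ge> 2"
  proof (rule ccontr)
    assume "\<not> k \<ge> 2" hence "k = 1" using k1 by simp
    hence "set ps = {l}" using l by (cases ps) (auto simp: k_def)
    thus False using xps x by auto
  qed
  obtain z where z: "z \<in> {x, y}" "z \<noteq> ps ! (k - 2)" using xy by auto
  have zps: "z \<in> set ps" and zl: "z \<noteq> l" and zF: "{l, z} \<in> F"
    using z xps yps x y ee by auto
  obtain j where j: "j < k" "ps ! j = z" using zps by (auto simp: in_set_conv_nth k_def)
  have "j \<noteq> k - 1" using j zl l by auto
  moreover have "j \<noteq> k - 2" using j z by auto
  ultimately have j3: "j + 3 \<le> k" using j by linarith
  define vs where "vs = drop j ps"
  have lvs: "length vs = k - j" by (simp add: vs_def k_def)
  have "is_cycle F vs"
    unfolding is_cycle_def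
  proof (intro conjI allI impI)
    show "3 \<le> length vs" using lvs j3 by simp
    show "distinct vs" using ps by (simp add: vs_def gpath_def)
    fix i assume i: "i < length vs"
    show "{vs ! i, vs ! ((i + 1) mod length vs)} \<in> F"
    proof (cases "Suc i < length vs")
      case True
      hence "(i + 1) mod length vs = Suc i" by simp
      moreover have "Suc (j + i) < length ps" using True lvs by (simp add: k_def)
      ultimately show ?thesis using ps True by (simp add: vs_def gpath_def k_def)
    next
      case False
      hence ii: "i = k - j - 1" using i lvs by simp
      hence "i + 1 = length vs" using lvs j3 by simp
      hence "(i + 1) mod length vs = 0" by simp
      moreover have "vs ! i = l" using ii l j3 by (simp add: vs_def k_def)
      moreover have "vs ! 0 = z" using j by (simp add: vs_def k_def)
      ultimately show ?thesis using zF by (simp add: insert_commute)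
    qed
  qed
  thus ?thesis by blast
qed


lemma forest_card_le:
  assumes fo: "forest F" and c2: "\<forall>e\<in>F. card e = 2"
  shows "finite S \<Longrightarrow> card {e\<in>F. e \<subseteq> S} \<le> card S"
proof (induction "card S" arbitrary: S rule: less_induct)
  case less
  have finF: "finite F" using fo by (simp add: forest_def)
  show ?case
  proof (cases "S = {}")
    case True
    have "{e\<in>F. e \<subseteq> S} = {}"
    proof (rule ccontr)
      assume "{e\<in>F. e \<subseteq> S} \<noteq> {}"
      then obtain e where "e \<in> F" "e = {}" using True by auto
      hence "card e = 0" by simp
      thus False using c2 \<open>e \<in> F\<close> by simp
    qed
    thus ?thesis by (metis card.empty zero_le)
  next
    case False
    show ?thesis
    proof (cases "\<exists>v\<in>S. card {e\<in>F. e \<subseteq> S \<and> v \<in> e} \<le> 1")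
      case True
      then obtain v where v: "v \<in> S" "card {e\<in>F. e \<subseteq> S \<and> v \<in> e} \<le> 1" by blast
      have "{e\<in>F. e \<subseteq> S} \<subseteq> {e\<in>F. e \<subseteq> S - {v}} \<union> {e\<in>F. e \<subseteq> S \<and> v \<in> e}" by auto
      hence "card {e\<in>F. e \<subseteq> S} \<le> card ({e\<in>F. e \<subseteq> S - {v}} \<union> {e\<in>F. e \<subseteq> S \<and> v \<in> e})"
        using finF by (intro card_mono) auto
      also have "\<dots> \<le> card {e\<in>F. e \<subseteq> S - {v}} + card {e\<in>F. e \<subseteq> S \<and> v \<in> e}"
        by (rule card_Un_le)
      also have "\<dots> \<le> card (S - {v}) + 1"
      proof -
        have "card (S - {v}) < card S" using less.prems v(1) by (rule card_Diff1_less)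
        hence "card {e\<in>F. e \<subseteq> S - {v}} \<le> card (S - {v})" using less.hyps[of "S - {v}"] less.prems by blast
        thus ?thesis using v(2) by linarith
      qed
      also have "\<dots> = card S"
      proof -
        have "card S > 0" using v less.prems card_gt_0_iff by blast
        thus ?thesis using v less.prems by (simp add: card_Diff_singleton)
      qed
      finally show ?thesis .
    next
      case nd: False
      have "\<exists>vs. is_cycle F vs"
      proof (rule deg2_cycle[OF less.prems False c2], intro ballI)
        fix v assume v: "v \<in> S"
        let ?A = "{e\<in>F. e \<subseteq> S \<and> v \<in> e}"
        have h: "\<not> card ?A \<le> Suc 0" using nd v by auto
        have fA: "finite ?A" using finF by auto
        have eq: "card ?A \<le> Suc 0 \<longleftrightarrow> (\<forall>x\<in>?A. \<forall>y\<in>?A. x = y)" by (rule card_le_Suc0_iff_eq[OF fA])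
        have "\<not> (\<forall>x\<in>?A. \<forall>y\<in>?A. x = y)"
        proof
          assume "\<forall>x\<in>?A. \<forall>y\<in>?A. x = y"
          hence "card ?A \<le> Suc 0" by (rule eq[THEN iffD2])
          thus False using h by contradiction
        qed
        then obtain e1 e2 where "e1 \<in> ?A" "e2 \<in> ?A" "e1 \<noteq> e2" by blast
        thus "\<exists>e1 e2. e1 \<noteq> e2 \<and> e1 \<in> F \<and> e2 \<in> F \<and> e1 \<subseteq> S \<and> e2 \<subseteq> S \<and> v \<in> e1 \<and> v \<in> e2"
          by (intro exI[of _ e1] exI[of _ e2]) simp
      qed
      thus ?thesis using fo by (simp add: forest_def)
    qed
  qed
qed


lemma forest_single: "forest {e}"
  unfolding forest_def
proof (intro conjI notI)
  assume "\<exists>vs. is_cycle {e} vs"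
  then obtain vs where c: "is_cycle {e} vs" by blast
  hence l3: "length vs \<ge> 3" and d: "distinct vs" and ed: "\<forall>i<length vs. {vs ! i, vs ! ((i + 1) mod length vs)} \<in> {e}"
    by (auto simp: is_cycle_def)
  have "vs \<noteq> []" using l3 by auto
  have "{vs!0, vs!1} = e" using ed[rule_format, of 0] l3 \<open>vs \<noteq> []\<close> by simp
  moreover have "{vs!1, vs!2} = e" using ed[rule_format, of 1] l3 by (simp add: numeral_2_eq_2)
  ultimately have "{vs!0, vs!1} = {vs!1, vs!2}" by simp
  moreover have "vs!0 \<noteq> vs!1" using d l3 nth_eq_iff_index_eq[of vs 0 1] \<open>vs \<noteq> []\<close> by simp
  moreover have "vs!0 \<noteq> vs!2" using d l3 nth_eq_iff_index_eq[of vs 0 2] \<open>vs \<noteq> []\<close> by simp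
  ultimately show False by (auto simp: doubleton_eq_iff)
qed simp


lemma arb_props:
  assumes finE: "finite E"
  shows "\<exists>Fs. (\<forall>i<arboricity E. forest (Fs i)) \<and> E = (\<Union>i<arboricity E. Fs i)"
    and "arboricity E \<le> card E"
proof -
  obtain h where h: "bij_betw h {0..<card E} E" using ex_bij_betw_nat_finite[OF finE] by blast
  have P: "\<exists>Fs :: nat \<Rightarrow> nat set set. (\<forall>i<card E. forest (Fs i)) \<and> E = (\<Union>i<card E. Fs i)"
  proof (intro exI conjI)
    show "\<forall>i<card E. forest ({h i})" using forest_single by blast
    show "E = (\<Union>i<card E. {h i})" using h by (auto simp: bij_betw_def atLeast0LessThan)
  qed
  show "\<exists>Fs. (\<forall>i<arboricity E. forest (Fs i)) \<and> E = (\<Union>i<arboricity E. Fs i)"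
    unfolding arboricity_def by (rule LeastI_ex) (use P in blast)
  show "arboricity E \<le> card E"
    unfolding arboricity_def by (rule Least_le) (use P in blast)
qed


lemma edges_le:
  assumes finE: "finite E" and c2: "\<forall>e\<in>E. card e = 2" and finS: "finite S"
  shows "card {e\<in>E. e \<subseteq> S} \<le> arboricity E * card S"
proof -
  obtain Fs where Fs: "\<forall>i<arboricity E. forest (Fs i)" "E = (\<Union>i<arboricity E. Fs i)"
    using arb_props(1)[OF finE] by blast
  have "{e\<in>E. e \<subseteq> S} = (\<Union>i<arboricity E. {e\<in>Fs i. e \<subseteq> S})" using Fs(2) by auto
  hence "card {e\<in>E. e \<subseteq> S} \<le> (\<Sum>i<arboricity E. card {e\<in>Fs i. e \<subseteq> S})"
    using card_UN_le[of "{..<arboricity E}" "\<lambda>i. {e\<in>Fs i. e \<subseteq> S}"] by simp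
  also have "\<dots> \<le> (\<Sum>i<arboricity E. card S)"
  proof (rule sum_mono)
    fix i assume i: "i \<in> {..<arboricity E}"
    have "\<forall>e\<in>Fs i. card e = 2" using c2 Fs(2) i by auto
    thus "card {e\<in>Fs i. e \<subseteq> S} \<le> card S" using forest_card_le Fs(1) i finS by auto
  qed
  finally show ?thesis by simp
qed


lemma min_deg:
  assumes finT: "finite T" and ne: "T \<noteq> {}" and c2: "\<forall>e\<in>E. card e = 2"
    and bd: "card {e\<in>E. e \<subseteq> T} \<le> a * card T"
  shows "\<exists>v\<in>T. card {w\<in>T. {v,w} \<in> E} \<le> 2 * a"
proof (rule ccontr)
  assume "\<not> ?thesis"
  hence big: "\<forall>v\<in>T. 2 * a + 1 \<le> card {w\<in>T. {v,w} \<in> E}" by auto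
  let ?ES = "{e\<in>E. e \<subseteq> T}"
  have "?ES \<subseteq> Pow T" by blast
  moreover have "finite (Pow T)" using finT by simp
  ultimately have finES: "finite ?ES" by (rule finite_subset)
  have sub: "Sigma T (\<lambda>v. {w\<in>T. {v,w} \<in> E}) \<subseteq> (\<Union>e\<in>?ES. {p. {fst p, snd p} = e})"
    by auto
  have c2p: "card {p. {fst p, snd p} = e} \<le> 2" if "e \<in> ?ES" for e
  proof -
    have "card e = 2" using c2 that by auto
    then obtain x y where e: "e = {x,y}" by (auto simp: card_2_iff)
    have "{p. {fst p, snd p} = e} \<subseteq> {(x,y),(y,x)}" using e by (auto simp: doubleton_eq_iff)
    hence "card {p. {fst p, snd p} = e} \<le> card {(x,y),(y,x)}" by (rule card_mono[rotated]) simp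
    also have "\<dots> \<le> 2" by (cases "x = y") simp_all
    finally show ?thesis .
  qed
  have "(\<Sum>v\<in>T. card {w\<in>T. {v,w} \<in> E}) = card (Sigma T (\<lambda>v. {w\<in>T. {v,w} \<in> E}))"
    using finT by simp
  also have "\<dots> \<le> card (\<Union>e\<in>?ES. {p. {fst p, snd p} = e})"
  proof (rule card_mono[OF _ sub])
    have "finite {p. {fst p, snd p} = e}" if "e \<in> ?ES" for e
    proof -
      have "card e = 2" using c2 that by auto
    then obtain x y where e: "e = {x,y}" by (auto simp: card_2_iff)
      have "{p. {fst p, snd p} = e} \<subseteq> {(x,y),(y,x)}" using e by (auto simp: doubleton_eq_iff)
      thus ?thesis by (rule finite_subset) simp
    qed
    thus "finite (\<Union>e\<in>?ES. {p. {fst p, snd p} = e})" using finES by blast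
  qed
  also have "\<dots> \<le> (\<Sum>e\<in>?ES. card {p. {fst p, snd p} = e})" using card_UN_le[OF finES] .
  also have "\<dots> \<le> (\<Sum>e\<in>?ES. 2)" using c2p by (rule sum_mono)
  also have "\<dots> = 2 * card ?ES" by simp
  also have "\<dots> \<le> 2 * a * card T" using bd by simp
  finally have A: "(\<Sum>v\<in>T. card {w\<in>T. {v,w} \<in> E}) \<le> 2 * a * card T" .
  have "(\<Sum>v\<in>T. (2 * a + 1)) \<le> (\<Sum>v\<in>T. card {w\<in>T. {v,w} \<in> E})" using big by (intro sum_mono) auto
  moreover have "(\<Sum>v\<in>T. (2 * a + 1)) = (2 * a + 1) * card T" by simp
  ultimately have "(2 * a + 1) * card T \<le> 2 * a * card T" using A by linarith
  hence "card T \<le> 0" by (simp add: algebra_simps)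
  moreover have "card T > 0" using finT ne by auto
  ultimately show False by simp
qed


lemma degen_color:
  assumes c2: "\<forall>e\<in>E. card e = 2"
    and bd: "\<forall>T. finite T \<longrightarrow> card {e\<in>E. e \<subseteq> T} \<le> a * card T"
  shows "finite S \<Longrightarrow> \<exists>col. (\<forall>u\<in>S. col u < 2*a+1) \<and> (\<forall>u\<in>S. \<forall>w\<in>S. {u,w} \<in> E \<longrightarrow> col u \<noteq> col w)"
proof (induction "card S" arbitrary: S rule: less_induct)
  case less
  show ?case
  proof (cases "S = {}")
    case True thus ?thesis by auto
  next
    case False
    obtain v where v: "v \<in> S" "card {w\<in>S. {v,w} \<in> E} \<le> 2 * a"
      using min_deg[OF less.prems False c2] bd less.prems by blast
    have "card (S - {v}) < card S" using v less.prems by (intro card_Diff1_less)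
    then obtain col where col: "\<forall>u\<in>S - {v}. col u < 2*a+1"
       "\<forall>u\<in>S - {v}. \<forall>w\<in>S - {v}. {u,w} \<in> E \<longrightarrow> col u \<noteq> col w"
      using less.hyps[of "S - {v}"] less.prems by blast
    let ?K = "col ` {w\<in>S. {v,w} \<in> E}"
    have "card ?K \<le> 2 * a" using v(2) card_image_le[of "{w\<in>S. {v,w} \<in> E}" col] less.prems by simp
    hence "card ?K < card {..<2*a+1}" by simp
    moreover have "finite ?K" using less.prems by simp
    ultimately have "\<not> {..<2*a+1} \<subseteq> ?K"
    proof (intro notI)
      assume "card ?K < card {..<2*a+1}" "finite ?K" "{..<2*a+1} \<subseteq> ?K"
      thus False using card_mono[of ?K "{..<2*a+1}"] by linarith
    qed
    then obtain k where k: "k \<in> {..<2*a+1}" "k \<notin> ?K" by blast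
    define col' where "col' = col(v := k)"
    have vv: "{v,v} \<notin> E" using c2 by force
    show ?thesis
    proof (intro exI conjI ballI impI)
      fix u assume "u \<in> S" thus "col' u < 2*a+1" using col k by (cases "u = v") (auto simp: col'_def)
    next
      fix u w assume u: "u \<in> S" and w: "w \<in> S" and e: "{u,w} \<in> E"
      show "col' u \<noteq> col' w"
      proof (cases "u = v")
        case True
        hence "w \<noteq> v" using e vv by auto
        thus ?thesis using True k w e by (auto simp: col'_def)
      next
        case uv: False
        show ?thesis
        proof (cases "w = v")
          case True
          have "{v,u} \<in> E" using e True by (simp add: insert_commute)
          thus ?thesis using True uv k u by (auto simp: col'_def)
        next
          case False thus ?thesis using uv col u w e by (auto simp: col'_def)
        qed
      qed
    qed
  qed
qed



definition nd :: "nat set \<Rightarrow> nat \<Rightarrow> nat" where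
  "nd V = (SOME h. bij_betw h {..<card V} V)"
definition rk :: "nat set \<Rightarrow> nat \<Rightarrow> nat" where
  "rk V = the_inv_into {..<card V} (nd V)"
definition grp :: "nat set \<Rightarrow> nat \<Rightarrow> nat \<Rightarrow> nat" where
  "grp V a u = rk V u mod a"
definition Fset :: "nat set \<Rightarrow> nat \<Rightarrow> nat set \<Rightarrow> nat \<Rightarrow> nat set" where
  "Fset V a Nu u = {w\<in>Nu. w \<in> V \<and> grp V a w = grp V a u \<and> u < w}"
definition Fl :: "nat set \<Rightarrow> nat \<Rightarrow> nat set \<Rightarrow> nat \<Rightarrow> nat list" where
  "Fl V a Nu u = sorted_list_of_set (Fset V a Nu u)"
definition Pg :: "nat set \<Rightarrow> nat \<Rightarrow> nat \<Rightarrow> nat set" where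
  "Pg V a i = {u\<in>V. grp V a u = i}"
definition off :: "nat set \<Rightarrow> nat \<Rightarrow> (nat \<Rightarrow> nat) \<Rightarrow> nat \<Rightarrow> nat" where
  "off V a fv u = sum fv {w\<in>V. grp V a w = grp V a u \<and> w < u}"
definition msum :: "nat set \<Rightarrow> nat \<Rightarrow> (nat \<Rightarrow> nat) \<Rightarrow> nat \<Rightarrow> nat" where
  "msum V a fv i = sum fv (Pg V a i)"
definition owner :: "nat set \<Rightarrow> nat \<Rightarrow> (nat \<Rightarrow> nat) \<Rightarrow> nat \<Rightarrow> nat \<Rightarrow> nat" where
  "owner V a fv i t = (THE u. u \<in> Pg V a i \<and> off V a fv u \<le> t \<and> t < off V a fv u + fv u)"
definition enc :: "nat \<Rightarrow> nat \<Rightarrow> nat \<Rightarrow> nat" where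
  "enc W x y = x * W + y + 1"
definition dec :: "nat \<Rightarrow> nat \<Rightarrow> nat \<times> nat" where
  "dec W m = ((m - 1) div W, (m - 1) mod W)"
definition rval :: "nat set \<Rightarrow> nat \<Rightarrow> (nat \<Rightarrow> nat) \<Rightarrow> nat \<Rightarrow> nat \<Rightarrow> nat set \<Rightarrow> (nat \<Rightarrow> nat) \<Rightarrow> nat \<Rightarrow> nat \<Rightarrow> nat" where
  "rval V a fv W x Nx h1 i t = (let ow = owner V a fv i t in
     if ow = x then enc W x (Fl V a Nx x ! (t - off V a fv ow)) else h1 ow)"
definition lval :: "nat set \<Rightarrow> nat \<Rightarrow> (nat \<Rightarrow> nat) \<Rightarrow> nat \<Rightarrow> nat \<Rightarrow> nat set \<Rightarrow> (nat \<Rightarrow> nat) list \<Rightarrow> nat \<Rightarrow> nat \<Rightarrow> nat" where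
  "lval V a fv W x Nx hist i t = (let z = nd V (t mod card V) in
     if z = x then rval V a fv W x Nx (hist ! 1) i t else (hist ! (2 + t div card V)) z)"
definition Dset :: "nat set \<Rightarrow> nat \<Rightarrow> (nat \<Rightarrow> nat) \<Rightarrow> nat \<Rightarrow> nat \<Rightarrow> nat set \<Rightarrow> (nat \<Rightarrow> nat) list \<Rightarrow> nat \<Rightarrow> (nat \<times> nat) set" where
  "Dset V a fv W x Nx hist i = (\<lambda>t. dec W (lval V a fv W x Nx hist i t)) ` {..<msum V a fv i}"
definition colf :: "nat set \<Rightarrow> (nat \<times> nat) set \<Rightarrow> nat \<Rightarrow> nat \<Rightarrow> nat" where
  "colf S D k = (SOME col. (\<forall>u\<in>S. col u < k) \<and> (\<forall>p\<in>D. col (fst p) \<noteq> col (snd p)))"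
definition fvv :: "nat set \<Rightarrow> nat \<Rightarrow> nat \<Rightarrow> nat set \<Rightarrow> (nat \<Rightarrow> nat) list \<Rightarrow> nat \<Rightarrow> nat" where
  "fvv V a x Nx hist = (\<lambda>u. if u = x then card (Fset V a Nx x) else (hist ! 0) u)"

definition msend :: "nat \<Rightarrow> cc_send" where
  "msend c n a V x Nx hist y = (let W = (max 2 n) ^ c; fv = fvv V a x Nx hist; r = length hist in
    if r = 0 then card (Fset V a Nx x)
    else if r = 1 then (let j = (rk V y + n - off V a fv x mod n) mod n in
        if j < card (Fset V a Nx x) then enc W x (Fl V a Nx x ! j) else 0)
    else if r = 2 \<or> r = 3 then (let i = rk V y; t = rk V x + (r - 2) * n in
        if i < a \<and> t < msum V a fv i then rval V a fv W x Nx (hist ! 1) i t else 0)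
    else if r = 4 then (let i = rk V x in
        if i < a \<and> grp V a y = i then colf (Pg V a i) (Dset V a fv W x Nx hist i) (2*a+1) y + 1 else 0)
    else 0)"

definition mout :: "nat \<Rightarrow> cc_out" where
  "mout c n a V v Nv hist = (let W = (max 2 n) ^ c; fv = fvv V a v Nv hist; i = grp V a v;
     col = (if rk V v < a then colf (Pg V a i) (Dset V a fv W v Nv hist i) (2*a+1) v
            else (hist ! 4) (nd V i) - 1)
     in i * (2*a+1) + col + 1)"

lemma cc_len: "length (cc_hist s a V E k x) = k"
  by (induction k) auto

lemma cc_nth: "m < k \<Longrightarrow> cc_hist s a V E k x ! m =
   (\<lambda>u. if u \<in> V \<and> u \<noteq> x then s (card V) a V u (nbrs E u) (cc_hist s a V E m u) x else 0)"
proof (induction k)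
  case 0 thus ?case by simp
next
  case (Suc k)
  show ?case
  proof (cases "m < k")
    case True thus ?thesis using Suc by (simp add: nth_append cc_len)
  next
    case False hence mk: "m = k" using Suc by simp
    show ?thesis unfolding mk by (simp add: nth_append cc_len)
  qed
qed

lemma nd_bij: "finite V \<Longrightarrow> bij_betw (nd V) {..<card V} V"
proof -
  assume "finite V"
  then obtain h where "bij_betw h {0..<card V} V" using ex_bij_betw_nat_finite by blast
  hence "\<exists>h. bij_betw h {..<card V} V" by (auto simp: atLeast0LessThan)
  thus ?thesis unfolding nd_def by (rule someI_ex)
qed

lemma rk_lt: "finite V \<Longrightarrow> u \<in> V \<Longrightarrow> rk V u < card V"
proof -
  assume f: "finite V" and u: "u \<in> V"
  have "bij_betw (the_inv_into {..<card V} (nd V)) V {..<card V}"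
    using bij_betw_the_inv_into[OF nd_bij[OF f]] .
  hence "the_inv_into {..<card V} (nd V) u \<in> {..<card V}" using u by (metis bij_betwE)
  thus ?thesis unfolding rk_def by simp
qed

lemma nd_rk: "finite V \<Longrightarrow> u \<in> V \<Longrightarrow> nd V (rk V u) = u"
  unfolding rk_def using nd_bij by (metis bij_betw_def f_the_inv_into_f)

lemma rk_nd: "finite V \<Longrightarrow> q < card V \<Longrightarrow> rk V (nd V q) = q"
  unfolding rk_def using nd_bij by (metis bij_betw_def lessThan_iff the_inv_into_f_f)

lemma nd_in: "finite V \<Longrightarrow> q < card V \<Longrightarrow> nd V q \<in> V"
  using nd_bij bij_betwE by blast

lemma rk_inj: "finite V \<Longrightarrow> u \<in> V \<Longrightarrow> w \<in> V \<Longrightarrow> rk V u = rk V w \<Longrightarrow> u = w"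
  by (metis nd_rk)

lemma mod_sub_lemma:
  assumes n: "(n::nat) > 0" and st: "s \<le> t"
  shows "(t mod n + n - s mod n) mod n = (t - s) mod n"
proof -
  obtain d where t: "t = s + d" using st le_Suc_ex by blast
  define a where "a = s mod n"
  define e where "e = d mod n"
  have a: "a < n" using n by (simp add: a_def)
  have e: "e < n" using n by (simp add: e_def)
  have tm: "t mod n = (a + e) mod n" unfolding t a_def e_def by (simp add: mod_add_eq)
  show ?thesis
  proof (cases "a + e < n")
    case True
    hence "t mod n = a + e" using tm by simp
    hence "t mod n + n - s mod n = e + n" by (simp add: a_def)
    thus ?thesis using e t by (simp add: e_def)
  next
    case False
    hence "(a + e) mod n = a + e - n" using a e by (simp add: mod_if)
    hence "t mod n + n - s mod n = e" using tm False by (simp add: a_def)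
    thus ?thesis using e t by (simp add: e_def)
  qed
qed


locale cc =
  fixes c :: nat and V :: "nat set" and E :: "nat set set" and a :: nat
  assumes finV: "finite V" and neV: "V \<noteq> {}" and idb: "V \<subseteq> {..< (max 2 (card V)) ^ c}"
    and sg: "simple_graph V E" and arb: "arboricity E = a" and a2: "a \<ge> 2"
begin

abbreviation "n \<equiv> card V"
abbreviation "W \<equiv> (max 2 (card V)) ^ c"
definition F where "F u = Fset V a (nbrs E u) u"
definition f where "f u = card (F u)"
abbreviation "P i \<equiv> Pg V a i"
abbreviation "ofs u \<equiv> off V a f u"
abbreviation "ms i \<equiv> msum V a f i"
abbreviation "own i t \<equiv> owner V a f i t"

lemma EsubV: "e \<in> E \<Longrightarrow> e \<subseteq> V" using sg by (auto simp: simple_graph_def)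
lemma c2: "\<forall>e\<in>E. card e = 2" using sg by (auto simp: simple_graph_def)
lemma finE: "finite E"
proof -
  have "E \<subseteq> Pow V" using EsubV by blast
  thus ?thesis using finV by (simp add: finite_subset)
qed
lemma npos: "n > 0" using finV neV by (simp add: card_gt_0_iff)

lemma edge_V: "{u,w} \<in> E \<Longrightarrow> u \<in> V \<and> w \<in> V" using EsubV by blast
lemma edge_ne: "{u,w} \<in> E \<Longrightarrow> u \<noteq> w" using c2 by force

lemma F_sub: "F u \<subseteq> V - {u}" by (auto simp: F_def Fset_def)
lemma finF: "finite (F u)" using F_sub finV finite_subset by blast
lemma f_lt: "u \<in> V \<Longrightarrow> f u < n"
proof -
  assume u: "u \<in> V"
  have "f u \<le> card (V - {u})" unfolding f_def using F_sub finV by (intro card_mono) auto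
  also have "\<dots> < n" by (rule card_Diff1_less[OF finV u])
  finally show ?thesis .
qed
lemma F_mem: "w \<in> F u \<longleftrightarrow> {u,w} \<in> E \<and> w \<in> V \<and> grp V a w = grp V a u \<and> u < w"
  by (simp add: F_def Fset_def nbrs_def)

lemma grp_lt: "grp V a u < a" using a2 by (simp add: grp_def)
lemma P_sub: "P i \<subseteq> V" by (auto simp: Pg_def)
lemma finP: "finite (P i)" using P_sub finV finite_subset by blast

lemma off_P: "u \<in> P i \<Longrightarrow> ofs u = sum f {w\<in>P i. w < u}"
  by (simp add: off_def Pg_def)

lemma off_split: "u \<in> P i \<Longrightarrow> sum f ({w\<in>P i. w < u} \<union> {u}) = ofs u + f u"
proof -
  assume u: "u \<in> P i"
  have "finite {w\<in>P i. w < u}" using finP by simp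
  thus ?thesis using off_P[OF u] by simp
qed

lemma off_f_le: "u \<in> P i \<Longrightarrow> w \<in> P i \<Longrightarrow> u < w \<Longrightarrow> ofs u + f u \<le> ofs w"
proof -
  assume u: "u \<in> P i" and w: "w \<in> P i" and uw: "u < w"
  have "ofs u + f u = sum f ({x\<in>P i. x < u} \<union> {u})" using off_split[OF u] by simp
  also have "\<dots> \<le> sum f {x\<in>P i. x < w}"
    by (rule sum_mono2) (use finP u uw in auto)
  also have "\<dots> = ofs w" using off_P[OF w] by simp
  finally show ?thesis .
qed

lemma off_le_ms: "u \<in> P i \<Longrightarrow> ofs u + f u \<le> ms i"
proof -
  assume u: "u \<in> P i"
  have "ofs u + f u = sum f ({x\<in>P i. x < u} \<union> {u})" using off_split[OF u] by simp
  also have "\<dots> \<le> sum f (P i)"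
    by (rule sum_mono2) (use finP u in auto)
  finally show ?thesis by (simp add: msum_def)
qed

lemma owner_uniq: "u1 \<in> P i \<Longrightarrow> u2 \<in> P i \<Longrightarrow> ofs u1 \<le> t \<Longrightarrow> t < ofs u1 + f u1 \<Longrightarrow>
   ofs u2 \<le> t \<Longrightarrow> t < ofs u2 + f u2 \<Longrightarrow> u1 = u2"
proof (rule ccontr)
  assume h: "u1 \<in> P i" "u2 \<in> P i" "ofs u1 \<le> t" "t < ofs u1 + f u1" "ofs u2 \<le> t" "t < ofs u2 + f u2"
    and ne: "u1 \<noteq> u2"
  show False
  proof (cases "u1 < u2")
    case True
    have "ofs u1 + f u1 \<le> ofs u2" using off_f_le[OF h(1) h(2) True] .
    thus False using h by linarith
  next
    case False
    hence "u2 < u1" using ne by simp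
    have "ofs u2 + f u2 \<le> ofs u1" using off_f_le[OF h(2) h(1) \<open>u2 < u1\<close>] .
    thus False using h by linarith
  qed
qed

lemma owner_eq: "u \<in> P i \<Longrightarrow> j < f u \<Longrightarrow> own i (ofs u + j) = u"
  unfolding owner_def
  by (rule the_equality) (auto intro: owner_uniq)

lemma owner_ex: assumes t: "t < ms i"
  shows "own i t \<in> P i \<and> ofs (own i t) \<le> t \<and> t < ofs (own i t) + f (own i t)"
proof -
  have Pne: "P i \<noteq> {}" using t by (auto simp: msum_def)
  define A where "A = {u\<in>P i. ofs u \<le> t}"
  define u0 where "u0 = Min (P i)"
  have u0: "u0 \<in> P i" using Pne finP by (simp add: u0_def)
  have e0: "{w\<in>P i. w < u0} = {}"
  proof -
    { fix w assume "w \<in> P i" "w < u0"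
      hence "u0 \<le> w" using finP by (simp add: u0_def)
      hence False using \<open>w < u0\<close> by simp }
    thus ?thesis by blast
  qed
  have "ofs u0 = sum f {w\<in>P i. w < u0}" by (rule off_P[OF u0])
  also have "\<dots> = 0" unfolding e0 by simp
  finally have "ofs u0 = 0" .
  hence "u0 \<in> A" using u0 by (simp add: A_def)
  have finA: "finite A" using finP by (simp add: A_def)
  define u where "u = Max A"
  have uA: "u \<in> A" using finA \<open>u0 \<in> A\<close> by (auto simp: u_def intro: Max_in)
  have uP: "u \<in> P i" and ut: "ofs u \<le> t" using uA by (auto simp: A_def)
  have "t < ofs u + f u"
  proof (rule ccontr)
    assume "\<not> t < ofs u + f u"
    hence le: "ofs u + f u \<le> t" by simp
    define B where "B = {w\<in>P i. u < w}"
    show False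
    proof (cases "B = {}")
      case True
      hence "P i = {w\<in>P i. w < u} \<union> {u}" using uP by (auto simp: B_def)
      hence "ms i = ofs u + f u" using off_split[OF uP] by (simp add: msum_def)
      thus False using le t by simp
    next
      case False
      define w where "w = Min B"
      have finB: "finite B" using finP by (simp add: B_def)
      have wB: "w \<in> B" using False finB by (simp add: w_def)
      hence wP: "w \<in> P i" and uw: "u < w" by (auto simp: B_def)
      have "{x\<in>P i. x < w} = {x\<in>P i. x < u} \<union> {u}"
      proof
        show "{x\<in>P i. x < w} \<subseteq> {x\<in>P i. x < u} \<union> {u}"
        proof
          fix x assume x: "x \<in> {x\<in>P i. x < w}"
          show "x \<in> {x\<in>P i. x < u} \<union> {u}"
          proof (cases "u < x")
            case True
            hence "x \<in> B" using x by (simp add: B_def)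
            hence "w \<le> x" using finB by (simp add: w_def)
            thus ?thesis using x by simp
          next
            case False thus ?thesis using x by auto
          qed
        qed
        show "{x\<in>P i. x < u} \<union> {u} \<subseteq> {x\<in>P i. x < w}" using uP uw by auto
      qed
      hence "ofs w = ofs u + f u" using off_P[OF wP] off_split[OF uP] by simp
      hence "w \<in> A" using wP le by (simp add: A_def)
      hence "w \<le> u" using finA by (simp add: u_def)
      thus False using uw by simp
    qed
  qed
  hence ex: "u \<in> P i \<and> ofs u \<le> t \<and> t < ofs u + f u" using uP ut by simp
  have "own i t = u" unfolding owner_def
    by (rule the_equality) (use ex owner_uniq in blast)+
  thus ?thesis using ex by simp
qed

end

context cc begin

lemma Sigma_card: "ms i = card (Sigma (P i) F)"
  using finP finF by (simp add: msum_def f_def)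

lemma Sigma_le_edges: "card (Sigma (P i) F) \<le> card {e\<in>E. e \<subseteq> P i}"
proof -
  have inj: "inj_on (\<lambda>p. {fst p, snd p}) (Sigma (P i) F)"
  proof (rule inj_onI)
    fix p q assume p: "p \<in> Sigma (P i) F" and q: "q \<in> Sigma (P i) F"
      and eq: "{fst p, snd p} = {fst q, snd q}"
    have "fst p < snd p" "fst q < snd q" using p q by (auto simp: F_mem)
    thus "p = q" using eq by (cases p, cases q) (auto simp: doubleton_eq_iff)
  qed
  have img: "(\<lambda>p. {fst p, snd p}) ` (Sigma (P i) F) \<subseteq> {e\<in>E. e \<subseteq> P i}"
  proof
    fix e assume "e \<in> (\<lambda>p. {fst p, snd p}) ` (Sigma (P i) F)"
    then obtain u w where uw: "u \<in> P i" "w \<in> F u" "e = {u, w}" by auto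
    hence "{u,w} \<in> E" "w \<in> V" "grp V a w = grp V a u" by (auto simp: F_mem)
    thus "e \<in> {e\<in>E. e \<subseteq> P i}" using uw by (auto simp: Pg_def)
  qed
  have "finite {e\<in>E. e \<subseteq> P i}" using finE by simp
  thus ?thesis using card_inj_on_le[OF inj img] by simp
qed

lemma edgesP: "card {e\<in>E. e \<subseteq> S} \<le> a * card S" if "finite S" for S
  using edges_le[OF finE c2 that] arb by simp

lemma cardP: "i < a \<Longrightarrow> card (P i) * a \<le> n + a - 1"
proof -
  assume i: "i < a"
  let ?h = "\<lambda>p. a * (rk V (fst p) div a) + snd p"
  have inj: "inj_on ?h (P i \<times> {..<a})"
  proof (rule inj_onI)
    fix p q assume p: "p \<in> P i \<times> {..<a}" and q: "q \<in> P i \<times> {..<a}" and eq: "?h p = ?h q"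
    have sp: "snd p < a" and sq: "snd q < a" using p q by auto
    have "?h p div a = rk V (fst p) div a" using sp a2 by simp
    moreover have "?h q div a = rk V (fst q) div a" using sq a2 by simp
    ultimately have d: "rk V (fst p) div a = rk V (fst q) div a" using eq by simp
    have "?h p mod a = snd p" using sp a2 by simp
    moreover have "?h q mod a = snd q" using sq a2 by simp
    ultimately have s: "snd p = snd q" using eq by simp
    have "rk V (fst p) mod a = i" "rk V (fst q) mod a = i" using p q by (auto simp: Pg_def grp_def)
    hence "rk V (fst p) = rk V (fst q)" using d by (metis div_mult_mod_eq)
    moreover have "fst p \<in> V" "fst q \<in> V" using p q by (auto simp: Pg_def)
    ultimately have "fst p = fst q" using rk_inj[OF finV] by blast
    thus "p = q" using s by (cases p, cases q) auto
  qed
  have img: "?h ` (P i \<times> {..<a}) \<subseteq> {..< n + a - 1}"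
  proof
    fix x assume "x \<in> ?h ` (P i \<times> {..<a})"
    then obtain u s where u: "u \<in> P i" "s < a" "x = a * (rk V u div a) + s" by auto
    have "rk V u < n" using u P_sub rk_lt[OF finV] by auto
    moreover have "a * (rk V u div a) \<le> rk V u" by simp
    ultimately have "x < n + a - 1" using u by linarith
    thus "x \<in> {..< n + a - 1}" by simp
  qed
  have "card (P i \<times> {..<a}) \<le> card {..< n + a - 1}"
    using card_inj_on_le[OF inj img] by simp
  thus ?thesis using finP by (simp add: card_cartesian_product)
qed

lemma ms_le: "i < a \<Longrightarrow> ms i \<le> 2 * n"
proof -
  assume i: "i < a"
  have A: "ms i \<le> a * card (P i)" using Sigma_card Sigma_le_edges edgesP[OF finP] by (metis order_trans)
  show ?thesis
  proof (cases "card (P i) \<ge> 2")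
    case True
    have "2 * a \<le> card (P i) * a" using True by simp
    hence "a < n" using cardP[OF i] a2 by linarith
    thus ?thesis using A cardP[OF i] by (simp add: mult.commute)
  next
    case False
    have "Sigma (P i) F = {}"
    proof (rule ccontr)
      assume "Sigma (P i) F \<noteq> {}"
      then obtain u w where "u \<in> P i" "w \<in> F u" by auto
      hence "u \<in> P i" "w \<in> P i" "u \<noteq> w" by (auto simp: F_mem Pg_def)
      hence "card {u, w} \<le> card (P i)" using finP by (intro card_mono) auto
      thus False using False \<open>u \<noteq> w\<close> by simp
    qed
    thus ?thesis using Sigma_card by simp
  qed
qed

definition Dtrue where "Dtrue i = Sigma (P i) F"
definition ctrue where "ctrue i = colf (P i) (Dtrue i) (2*a+1)"

lemma ctrue_ok: "(\<forall>u\<in>P i. ctrue i u < 2*a+1) \<and> (\<forall>p\<in>Dtrue i. ctrue i (fst p) \<noteq> ctrue i (snd p))"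
proof -
  obtain col where col: "\<forall>u\<in>P i. col u < 2*a+1" "\<forall>u\<in>P i. \<forall>w\<in>P i. {u,w} \<in> E \<longrightarrow> col u \<noteq> col w"
    using degen_color[OF c2, of a "P i"] edgesP finP by blast
  have "\<forall>p\<in>Dtrue i. col (fst p) \<noteq> col (snd p)"
  proof
    fix p assume "p \<in> Dtrue i"
    then obtain u w where "p = (u,w)" "u \<in> P i" "w \<in> F u" by (auto simp: Dtrue_def)
    thus "col (fst p) \<noteq> col (snd p)" using col by (auto simp: F_mem Pg_def)
  qed
  hence "\<exists>col. (\<forall>u\<in>P i. col u < 2*a+1) \<and> (\<forall>p\<in>Dtrue i. col (fst p) \<noteq> col (snd p))" using col by blast
  thus ?thesis unfolding ctrue_def colf_def by (rule someI_ex)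
qed

lemma cardE: "card E \<le> n * n"
proof -
  have "E \<subseteq> (\<lambda>p. {fst p, snd p}) ` (V \<times> V)"
  proof
    fix e assume e: "e \<in> E"
    then obtain x y where "e = {x,y}" using c2 by (metis card_2_iff)
    thus "e \<in> (\<lambda>p. {fst p, snd p}) ` (V \<times> V)" using EsubV[OF e] by force
  qed
  hence "card E \<le> card ((\<lambda>p. {fst p, snd p}) ` (V \<times> V))" using finV by (intro card_mono) auto
  also have "\<dots> \<le> card (V \<times> V)" by (rule card_image_le) (use finV in simp)
  finally show ?thesis by (simp add: card_cartesian_product)
qed

lemma a_le: "a \<le> n * n" using arb_props(2)[OF finE] cardE arb by simp

end

context cc begin

declare cc_hist.simps(2)[simp del]

abbreviation "hist k v \<equiv> cc_hist (msend c) a V E k v"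
abbreviation "fvx x k \<equiv> fvv V a x (nbrs E x) (hist k x)"
abbreviation "FL u \<equiv> Fl V a (nbrs E u) u"

lemma FL_eq: "FL u = sorted_list_of_set (F u)" by (simp add: Fl_def F_def)
lemma FL_len: "length (FL u) = f u" using finF by (simp add: FL_eq f_def)
lemma FL_nth: "j < f u \<Longrightarrow> FL u ! j \<in> F u"
  using FL_len finF by (metis FL_eq nth_mem set_sorted_list_of_set)

lemma hnth: "m < k \<Longrightarrow> hist k x ! m =
   (\<lambda>u. if u \<in> V \<and> u \<noteq> x then msend c n a V u (nbrs E u) (hist m u) x else 0)"
  by (rule cc_nth)

lemma card_F: "card (Fset V a (nbrs E u) u) = f u" by (simp add: f_def F_def)

lemma snd0: "msend c n a V u (nbrs E u) [] y = f u"
  by (simp add: msend_def card_F)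

lemma fvx_eq: "x \<in> V \<Longrightarrow> 1 \<le> k \<Longrightarrow> u \<in> V \<Longrightarrow> fvx x k u = f u"
proof -
  assume x: "x \<in> V" and k: "1 \<le> k" and u: "u \<in> V"
  show ?thesis
  proof (cases "u = x")
    case True thus ?thesis by (simp add: fvv_def card_F)
  next
    case False
    have "hist k x ! 0 = (\<lambda>u. if u \<in> V \<and> u \<noteq> x then msend c n a V u (nbrs E u) (hist 0 u) x else 0)"
      using k by (intro hnth) simp
    thus ?thesis using False u by (simp add: fvv_def snd0)
  qed
qed

lemma cong_off: "\<forall>u\<in>V. fv u = f u \<Longrightarrow> off V a fv u = ofs u"
  unfolding off_def by (rule sum.cong) auto
lemma cong_msum: "\<forall>u\<in>V. fv u = f u \<Longrightarrow> msum V a fv i = ms i"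
  unfolding msum_def by (rule sum.cong) (auto simp: Pg_def)
lemma cong_owner: "\<forall>u\<in>V. fv u = f u \<Longrightarrow> owner V a fv i t = own i t"
proof -
  assume h: "\<forall>u\<in>V. fv u = f u"
  have "\<And>u. (u \<in> Pg V a i \<and> off V a fv u \<le> t \<and> t < off V a fv u + fv u) =
             (u \<in> Pg V a i \<and> ofs u \<le> t \<and> t < ofs u + f u)"
    using h cong_off[OF h] by (auto simp: Pg_def)
  thus ?thesis unfolding owner_def by simp
qed

lemma fvx_all: "x \<in> V \<Longrightarrow> 1 \<le> k \<Longrightarrow> \<forall>u\<in>V. fvx x k u = f u"
  using fvx_eq by blast

definition tv where "tv i t = enc W (own i t) (FL (own i t) ! (t - ofs (own i t)))"

lemma snd1: "u \<in> V \<Longrightarrow> msend c n a V u (nbrs E u) (hist 1 u) y =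
   (let j = (rk V y + n - ofs u mod n) mod n in if j < f u then enc W u (FL u ! j) else 0)"
proof -
  assume u: "u \<in> V"
  have "length (hist 1 u) = 1" by (simp add: cc_len)
  moreover have fa: "\<forall>w\<in>V. fvx u 1 w = f w" by (rule fvx_all[OF u]) simp
  moreover have "off V a (fvx u 1) u = ofs u" by (rule cong_off[OF fa])
  ultimately show ?thesis by (simp add: msend_def card_F Let_def)
qed

lemma tv_range: "t < ms i \<Longrightarrow> own i t \<in> P i \<and> t - ofs (own i t) < f (own i t)"
  using owner_ex by fastforce

lemma relay: assumes x: "x \<in> V" and i: "i < a" and t: "t < ms i" and rx: "rk V x = t mod n" and k: "2 \<le> k"
  shows "rval V a (fvx x k) W x (nbrs E x) (hist k x ! 1) i t = tv i t"
proof -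
  have fa: "\<forall>u\<in>V. fvx x k u = f u" using fvx_all[OF x] k by simp
  define o' where "o' = own i t"
  have o': "o' \<in> P i" "ofs o' \<le> t" "t < ofs o' + f o'" using owner_ex[OF t] by (auto simp: o'_def)
  have oV: "o' \<in> V" using o' P_sub by auto
  show ?thesis
  proof (cases "o' = x")
    case True
    thus ?thesis unfolding rval_def tv_def using cong_owner[OF fa] cong_off[OF fa]
      by (simp add: o'_def Let_def)
  next
    case False
    have "hist k x ! 1 = (\<lambda>u. if u \<in> V \<and> u \<noteq> x then msend c n a V u (nbrs E u) (hist 1 u) x else 0)"
      using k by (intro hnth) simp
    hence h1: "(hist k x ! 1) o' = (let j = (rk V x + n - ofs o' mod n) mod n in if j < f o' then enc W o' (FL o' ! j) else 0)"
      using False oV snd1[OF oV] by simp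
    have "(rk V x + n - ofs o' mod n) mod n = (t - ofs o') mod n"
      using rx mod_sub_lemma[OF npos o'(2)] by simp
    also have "\<dots> = t - ofs o'" using o' f_lt[OF oV] by simp
    finally have j: "(rk V x + n - ofs o' mod n) mod n = t - ofs o'" .
    have "t - ofs o' < f o'" using o' by simp
    hence "(hist k x ! 1) o' = enc W o' (FL o' ! (t - ofs o'))" using h1 j by (simp add: Let_def)
    thus ?thesis unfolding rval_def tv_def using cong_owner[OF fa] False
      by (simp add: o'_def Let_def)
  qed
qed

lemma snd23: assumes z: "z \<in> V" and q: "q < 2"
  shows "msend c n a V z (nbrs E z) (hist (2 + q) z) y =
    (if rk V y < a \<and> rk V z + q * n < ms (rk V y) then tv (rk V y) (rk V z + q * n) else 0)"
proof -
  have len: "length (hist (2+q) z) = 2 + q" by (simp add: cc_len)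
  have fa: "\<forall>u\<in>V. fvx z (2+q) u = f u" using fvx_all[OF z] by simp
  have rz: "rk V z < n" using rk_lt[OF finV z] .
  have rm: "(rk V z + q * n) mod n = rk V z" using rz by simp
  show ?thesis
  proof (cases "rk V y < a \<and> rk V z + q * n < ms (rk V y)")
    case True
    have "rval V a (fvx z (2+q)) W z (nbrs E z) (hist (2+q) z ! 1) (rk V y) (rk V z + q * n) = tv (rk V y) (rk V z + q * n)"
      using relay[OF z, of "rk V y" "rk V z + q * n" "2+q"] True rm by simp
    thus ?thesis using True len q cong_msum[OF fa] by (auto simp: msend_def Let_def)
  next
    case False thus ?thesis using len q cong_msum[OF fa] by (auto simp: msend_def Let_def)
  qed
qed

lemma leader: assumes x: "x \<in> V" and i: "rk V x < a" and k: "4 \<le> k" and t: "t < ms (rk V x)"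
  shows "lval V a (fvx x k) W x (nbrs E x) (hist k x) (rk V x) t = tv (rk V x) t"
proof -
  define z where "z = nd V (t mod n)"
  have tn: "t mod n < n" using npos by simp
  have zV: "z \<in> V" using nd_in[OF finV tn] by (simp add: z_def)
  have rz: "rk V z = t mod n" using rk_nd[OF finV tn] by (simp add: z_def)
  show ?thesis
  proof (cases "z = x")
    case True
    thus ?thesis unfolding lval_def using relay[OF x i t _ ] rz k by (simp add: z_def Let_def)
  next
    case False
    have t2: "t < 2 * n" using ms_le[OF i] t by simp
    define q where "q = t div n"
    have q: "q < 2" using t2 npos by (simp add: q_def less_mult_imp_div_less mult.commute)
    have tq: "rk V z + q * n = t" using rz by (simp add: q_def)
    have "hist k x ! (2 + q) = (\<lambda>u. if u \<in> V \<and> u \<noteq> x then msend c n a V u (nbrs E u) (hist (2+q) u) x else 0)"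
      using k q by (intro hnth) simp
    hence "(hist k x ! (2 + q)) z = tv (rk V x) t"
      using False zV snd23[OF zV q, of x] tq i t by simp
    thus ?thesis unfolding lval_def using False by (simp add: z_def q_def Let_def)
  qed
qed

end

context cc begin

declare cc_hist.simps(2)[simp del]

lemma Wpos: "W > 0" by auto
lemma idW: "u \<in> V \<Longrightarrow> u < W" using idb by auto

lemma dec_enc: "y < W \<Longrightarrow> dec W (enc W x y) = (x, y)"
  by (simp add: dec_def enc_def)

lemma tv_dec: "t < ms i \<Longrightarrow> dec W (tv i t) = (own i t, FL (own i t) ! (t - ofs (own i t)))"
proof -
  assume t: "t < ms i"
  have "FL (own i t) ! (t - ofs (own i t)) \<in> F (own i t)" using tv_range[OF t] FL_nth by blast
  hence "FL (own i t) ! (t - ofs (own i t)) < W" using F_sub idW by blast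
  thus ?thesis by (simp add: tv_def dec_enc)
qed

lemma img_true: "(\<lambda>t. dec W (tv i t)) ` {..<ms i} = Dtrue i"
proof
  show "(\<lambda>t. dec W (tv i t)) ` {..<ms i} \<subseteq> Dtrue i"
  proof
    fix p assume "p \<in> (\<lambda>t. dec W (tv i t)) ` {..<ms i}"
    then obtain t where t: "t < ms i" "p = dec W (tv i t)" by auto
    hence "p = (own i t, FL (own i t) ! (t - ofs (own i t)))" using tv_dec by simp
    thus "p \<in> Dtrue i" using tv_range[OF t(1)] FL_nth by (auto simp: Dtrue_def)
  qed
  show "Dtrue i \<subseteq> (\<lambda>t. dec W (tv i t)) ` {..<ms i}"
  proof
    fix p assume "p \<in> Dtrue i"
    then obtain u w where p: "p = (u, w)" "u \<in> P i" "w \<in> F u" by (auto simp: Dtrue_def)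
    have "w \<in> set (FL u)" using p finF by (simp add: FL_eq)
    then obtain j where j: "j < f u" "FL u ! j = w" using FL_len by (metis in_set_conv_nth)
    define t where "t = ofs u + j"
    have t: "t < ms i" using off_le_ms[OF p(2)] j by (simp add: t_def)
    have o: "own i t = u" using owner_eq[OF p(2) j(1)] by (simp add: t_def)
    have "dec W (tv i t) = p" using tv_dec[OF t] o j p by (simp add: t_def)
    thus "p \<in> (\<lambda>t. dec W (tv i t)) ` {..<ms i}" using t by force
  qed
qed

lemma Dset_eq: assumes x: "x \<in> V" and i: "rk V x < a" and k: "4 \<le> k"
  shows "Dset V a (fvx x k) W x (nbrs E x) (hist k x) (rk V x) = Dtrue (rk V x)"
proof -
  have fa: "\<forall>u\<in>V. fvx x k u = f u" using fvx_all[OF x] k by simp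
  have "Dset V a (fvx x k) W x (nbrs E x) (hist k x) (rk V x) =
        (\<lambda>t. dec W (lval V a (fvx x k) W x (nbrs E x) (hist k x) (rk V x) t)) ` {..<ms (rk V x)}"
    unfolding Dset_def using cong_msum[OF fa] by simp
  also have "\<dots> = (\<lambda>t. dec W (tv (rk V x) t)) ` {..<ms (rk V x)}"
    by (rule image_cong) (use leader[OF x i k] in auto)
  also have "\<dots> = Dtrue (rk V x)" by (rule img_true)
  finally show ?thesis .
qed

lemma snd4: assumes x: "x \<in> V"
  shows "msend c n a V x (nbrs E x) (hist 4 x) y =
     (if rk V x < a \<and> grp V a y = rk V x then ctrue (rk V x) y + 1 else 0)"
proof -
  have len: "length (hist 4 x) = 4" by (simp add: cc_len)
  show ?thesis
  proof (cases "rk V x < a \<and> grp V a y = rk V x")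
    case True
    have "Dset V a (fvx x 4) W x (nbrs E x) (hist 4 x) (rk V x) = Dtrue (rk V x)"
      using Dset_eq[OF x] True by simp
    thus ?thesis using True len by (simp add: msend_def Let_def ctrue_def)
  next
    case False thus ?thesis using len by (auto simp: msend_def Let_def)
  qed
qed

lemma grp_le: "grp V a v \<le> rk V v" by (simp add: grp_def)

lemma out_eq: assumes v: "v \<in> V"
  shows "mout c n a V v (nbrs E v) (hist 5 v) = grp V a v * (2*a+1) + ctrue (grp V a v) v + 1"
proof (cases "rk V v < a")
  case True
  hence g: "grp V a v = rk V v" by (simp add: grp_def)
  have "Dset V a (fvx v 5) W v (nbrs E v) (hist 5 v) (rk V v) = Dtrue (rk V v)"
    using Dset_eq[OF v True] by simp
  thus ?thesis using True g by (simp add: mout_def Let_def ctrue_def)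
next
  case False
  define i where "i = grp V a v"
  define l where "l = nd V i"
  have irk: "i < n" using grp_le rk_lt[OF finV v] by (simp add: i_def) (meson le_less_trans)
  have lV: "l \<in> V" using nd_in[OF finV irk] by (simp add: l_def)
  have rl: "rk V l = i" using rk_nd[OF finV irk] by (simp add: l_def)
  have ia: "i < a" using grp_lt by (simp add: i_def)
  have lv: "l \<noteq> v" using rl ia False by auto
  have "hist 5 v ! 4 = (\<lambda>u. if u \<in> V \<and> u \<noteq> v then msend c n a V u (nbrs E u) (hist 4 u) v else 0)"
    by (rule hnth) simp
  hence "(hist 5 v ! 4) l = ctrue i v + 1" using lV lv snd4[OF lV, of v] rl ia by (simp add: i_def)
  thus ?thesis using False by (simp add: mout_def Let_def i_def l_def)
qed

lemma enc_bound: "x < W \<Longrightarrow> y < W \<Longrightarrow> enc W x y < (max 2 n) ^ (2*c+4)"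
proof -
  assume x: "x < W" and y: "y < W"
  obtain m where m: "W = Suc m" using Wpos by (metis gr0_implies_Suc)
  have "x \<le> m" "y \<le> m" using x y m by auto
  have "x * W \<le> m * W" using mult_le_mono1[OF \<open>x \<le> m\<close>] .
  moreover have "y + 1 \<le> W" using \<open>y \<le> m\<close> m by simp
  ultimately have "x * W + y + 1 \<le> m * W + W" by linarith
  also have "\<dots> = W * W" using m by simp
  also have "\<dots> < W * W * (max 2 n) ^ 4"
  proof -
    have "(max 2 n) ^ 4 \<ge> (2::nat) ^ 4" by (intro power_mono) auto
    hence "(max 2 n) ^ 4 > 1" by simp
    thus ?thesis using Wpos by simp
  qed
  also have "\<dots> = (max 2 n) ^ (2*c+4)" by (simp add: power_add power_mult power2_eq_square mult.commute)
  finally show ?thesis by (simp add: enc_def)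
qed

end

lemma dm: "x < (K::nat) \<Longrightarrow> (g * K + x) div K = g" by simp

context cc begin

declare cc_hist.simps(2)[simp del]

lemma N_ge: "(k::nat) < max 2 n \<Longrightarrow> k < (max 2 n) ^ (2*c+4)"
proof -
  assume k: "k < max 2 n"
  have "max 2 n \<le> (max 2 n) ^ (2*c+4)" by (rule self_le_power) auto
  thus ?thesis using k by (rule less_le_trans[rotated])
qed

lemma msg_bound: assumes r: "r < 5" and u: "u \<in> V" and v: "v \<in> V" and uv: "u \<noteq> v"
  shows "msend c n a V u (nbrs E u) (hist r u) v < (max 2 n) ^ (2*c+4)"
proof -
  have N2: "(max 2 n) ^ (2*c+4) > 0" by auto
  have disj: "r = 0 \<or> r = 1 \<or> r = 2 + 0 \<or> r = 2 + 1 \<or> r = 4" using r by auto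
  have A0: ?thesis if "r = 0"
  proof -
    have "msend c n a V u (nbrs E u) (hist r u) v = f u" using that by (simp add: snd0)
    moreover have "f u < max 2 n" using f_lt[OF u] by simp
    ultimately show ?thesis using N_ge[of "f u"] by metis
  qed
  have A1: ?thesis if r1: "r = 1"
    proof (cases "(rk V v + n - ofs u mod n) mod n < f u")
      case True
      define j where "j = (rk V v + n - ofs u mod n) mod n"
      have "FL u ! j \<in> F u" using FL_nth True by (simp add: j_def)
      hence "FL u ! j < W" using F_sub idW by blast
      hence "enc W u (FL u ! j) < (max 2 n) ^ (2*c+4)" using enc_bound idW[OF u] by blast
      thus ?thesis using r1 snd1[OF u, of v] True by (simp add: Let_def j_def)
    next
      case False thus ?thesis using r1 snd1[OF u, of v] N2 by (simp add: Let_def)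
    qed
  have A2: ?thesis if q: "q < 2" and rq: "r = 2 + q" for q
    proof (cases "rk V v < a \<and> rk V u + q * n < ms (rk V v)")
      case True
      define t where "t = rk V u + q * n"
      define i where "i = rk V v"
      have t: "t < ms i" using True by (simp add: t_def i_def)
      have ow: "own i t \<in> V" using tv_range[OF t] P_sub by blast
      have "FL (own i t) ! (t - ofs (own i t)) \<in> F (own i t)" using tv_range[OF t] FL_nth by blast
      hence "FL (own i t) ! (t - ofs (own i t)) < W" using F_sub idW by blast
      hence "tv i t < (max 2 n) ^ (2*c+4)" unfolding tv_def using enc_bound idW[OF ow] by blast
      thus ?thesis using rq snd23[OF u q, of v] True by (simp add: t_def i_def)
    next
      case False
      have "msend c n a V u (nbrs E u) (hist (2+q) u) v = 0"
        by (subst snd23[OF u q]) (rule if_not_P[OF False])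
      thus ?thesis using rq N2 by simp
    qed
  have A4: ?thesis if r4: "r = 4"
    proof (cases "rk V u < a \<and> grp V a v = rk V u")
      case True
      have "v \<in> P (rk V u)" using v True by (simp add: Pg_def)
      hence "ctrue (rk V u) v < 2*a+1" using ctrue_ok by blast
      moreover have "2*a+1 \<le> 2 * (n*n) + 1" using a_le by simp
      moreover have "2 * (n*n) + 1 < (max 2 n) ^ (2*c+4)"
      proof -
        have nN: "n \<le> max 2 n" by simp
        have "n * n \<le> max 2 n * max 2 n" using mult_le_mono[OF nN nN] .
        moreover have "2 * (max 2 n * max 2 n) + 1 < max 2 n * max 2 n * (max 2 n * max 2 n)"
        proof -
          define M where "M = max 2 n * max 2 n"
          have "M \<ge> 4" unfolding M_def using mult_le_mono[of 2 "max 2 n" 2 "max 2 n"] by simp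
          have "4 * M \<le> M * M" using mult_le_mono1[OF \<open>M \<ge> 4\<close>] .
          hence "2 * M + 1 < M * M" using \<open>M \<ge> 4\<close> by linarith
          thus ?thesis by (simp add: M_def)
        qed
        moreover have "max 2 n * max 2 n * (max 2 n * max 2 n) = (max 2 n) ^ 4"
          by (simp add: power4_eq_xxxx mult.assoc)
        moreover have "(max 2 n) ^ 4 \<le> (max 2 n) ^ (2*c+4)" by (rule power_increasing) auto
        ultimately show ?thesis by linarith
      qed
      ultimately show ?thesis using r4 snd4[OF u, of v] True by simp
    next
      case False
      have "msend c n a V u (nbrs E u) (hist 4 u) v = 0"
        by (subst snd4[OF u]) (rule if_not_P[OF False])
      thus ?thesis using r4 N2 by simp
    qed
  show ?thesis using disj
  proof (elim disjE)
    assume "r = 2 + 0" thus ?thesis using A2[of 0] by simp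
  next
    assume "r = 2 + 1" thus ?thesis using A2[of 1] by simp
  qed (use A0 A1 A4 in auto)
qed

lemma color_prop: "proper_coloring V E (\<lambda>v. mout c n a V v (nbrs E v) (hist 5 v)) (5 * a^2)"
  unfolding proper_coloring_def
proof (intro conjI ballI allI impI)
  fix v assume v: "v \<in> V"
  define g where "g = grp V a v"
  have g: "g < a" using grp_lt by (simp add: g_def)
  have "v \<in> P g" using v by (simp add: Pg_def g_def)
  hence cl: "ctrue g v < 2*a+1" using ctrue_ok by blast
  have "g * (2*a+1) + ctrue g v + 1 \<le> g * (2*a+1) + (2*a+1)" using cl by simp
  also have "\<dots> = (g+1) * (2*a+1)" by simp
  also have "\<dots> \<le> a * (2*a+1)" using g by (intro mult_le_mono1) simp
  also have "\<dots> \<le> 5 * a^2" by (simp add: power2_eq_square algebra_simps)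
  finally show "mout c n a V v (nbrs E v) (hist 5 v) \<in> {1..5 * a^2}"
    using out_eq[OF v] by (simp add: g_def)
next
  fix u v assume e: "{u,v} \<in> E"
  have uV: "u \<in> V" and vV: "v \<in> V" using edge_V[OF e] by auto
  have uv: "u \<noteq> v" using edge_ne[OF e] .
  let ?K = "2*a+1"
  show "mout c n a V u (nbrs E u) (hist 5 u) \<noteq> mout c n a V v (nbrs E v) (hist 5 v)"
  proof
    assume eq: "mout c n a V u (nbrs E u) (hist 5 u) = mout c n a V v (nbrs E v) (hist 5 v)"
    define gu where "gu = grp V a u"
    define gv where "gv = grp V a v"
    have cu: "ctrue gu u < ?K" using ctrue_ok uV by (auto simp: Pg_def gu_def)
    have cv: "ctrue gv v < ?K" using ctrue_ok vV by (auto simp: Pg_def gv_def)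
    have e2: "gu * ?K + ctrue gu u = gv * ?K + ctrue gv v" using eq out_eq[OF uV] out_eq[OF vV]
      by (simp add: gu_def gv_def)
    have "(gu * ?K + ctrue gu u) div ?K = gu" using cu by (rule dm)
    moreover have "(gv * ?K + ctrue gv v) div ?K = gv" using cv by (rule dm)
    ultimately have gg: "gu = gv" using e2 by simp
    hence cc': "ctrue gu u = ctrue gu v" using e2 by simp
    have ne: "\<And>x y. {x,y} \<in> E \<Longrightarrow> x < y \<Longrightarrow> grp V a x = grp V a y \<Longrightarrow> ctrue (grp V a x) x \<noteq> ctrue (grp V a x) y"
    proof -
      fix x y assume xy: "{x,y} \<in> E" "x < y" "grp V a x = grp V a y"
      have "x \<in> V" "y \<in> V" using edge_V[OF xy(1)] by auto
      hence "(x, y) \<in> Dtrue (grp V a x)" using xy by (auto simp: Dtrue_def Pg_def F_mem)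
      thus "ctrue (grp V a x) x \<noteq> ctrue (grp V a x) y" using ctrue_ok by fastforce
    qed
    show False
    proof (cases "u < v")
      case True thus False using ne[OF e True] gg cc' by (simp add: gu_def gv_def)
    next
      case False
      hence "v < u" using uv by simp
      moreover have "{v,u} \<in> E" using e by (simp add: insert_commute)
      ultimately show False using ne gg cc' by (metis gu_def gv_def)
    qed
  qed
qed

lemma rounds: "real 5 \<le> real 5 * (log 2 (real a) + real (log_star n))"
proof -
  have "log 2 2 \<le> log 2 (real a)" using a2 by (subst log_le_cancel_iff) auto
  hence "1 \<le> log 2 (real a)" by simp
  thus ?thesis by simp
qed

end

theorem theorem3:
  shows "\<forall>c::nat. \<exists>(C::nat) (B::nat) (send::cc_send) (out::cc_out) (T::nat \<Rightarrow> nat \<Rightarrow> nat).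
    \<forall>(V::nat set) (E::nat set set) (a::nat).
      finite V \<and> V \<noteq> {} \<and> V \<subseteq> {..< (max 2 (card V)) ^ c} \<and>
      simple_graph V E \<and> arboricity E = a \<and> a \<ge> 2 \<longrightarrow>
        real (T (card V) a) \<le> real C * (log 2 (real a) + real (log_star (card V))) \<and>
        (\<forall>r < T (card V) a. \<forall>u\<in>V. \<forall>v\<in>V. u \<noteq> v \<longrightarrow>
           send (card V) a V u (nbrs E u) (cc_hist send a V E r u) v < (max 2 (card V)) ^ B) \<and>
        proper_coloring V E
          (\<lambda>v. out (card V) a V v (nbrs E v) (cc_hist send a V E (T (card V) a) v))
          (C * a ^ 2)"
proof
  fix c :: nat
  show "\<exists>(C::nat) (B::nat) (send::cc_send) (out::cc_out) (T::nat \<Rightarrow> nat \<Rightarrow> nat).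
    \<forall>(V::nat set) (E::nat set set) (a::nat).
      finite V \<and> V \<noteq> {} \<and> V \<subseteq> {..< (max 2 (card V)) ^ c} \<and>
      simple_graph V E \<and> arboricity E = a \<and> a \<ge> 2 \<longrightarrow>
        real (T (card V) a) \<le> real C * (log 2 (real a) + real (log_star (card V))) \<and>
        (\<forall>r < T (card V) a. \<forall>u\<in>V. \<forall>v\<in>V. u \<noteq> v \<longrightarrow>
           send (card V) a V u (nbrs E u) (cc_hist send a V E r u) v < (max 2 (card V)) ^ B) \<and>
        proper_coloring V E
          (\<lambda>v. out (card V) a V v (nbrs E v) (cc_hist send a V E (T (card V) a) v))
          (C * a ^ 2)"
  proof (intro exI allI impI)
    fix V :: "nat set" and E :: "nat set set" and a :: nat
    assume h: "finite V \<and> V \<noteq> {} \<and> V \<subseteq> {..< (max 2 (card V)) ^ c} \<and>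
      simple_graph V E \<and> arboricity E = a \<and> a \<ge> 2"
    interpret cc c V E a using h by unfold_locales auto
    show "real ((\<lambda>_ _. 5::nat) (card V) a) \<le> real (5::nat) * (log 2 (real a) + real (log_star (card V))) \<and>
        (\<forall>r < (\<lambda>_ _. 5::nat) (card V) a. \<forall>u\<in>V. \<forall>v\<in>V. u \<noteq> v \<longrightarrow>
           msend c (card V) a V u (nbrs E u) (cc_hist (msend c) a V E r u) v < (max 2 (card V)) ^ (2*c+4)) \<and>
        proper_coloring V E
          (\<lambda>v. mout c (card V) a V v (nbrs E v) (cc_hist (msend c) a V E ((\<lambda>_ _. 5::nat) (card V) a) v))
          (5 * a ^ 2)"
      using rounds msg_bound color_prop by simp
  qed
qed


end
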